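(* Let $n\ge3$, $\zeta=2\pi/n$, $m\in\big([1,n/4)\cup(n/4,n/2]\big)\cap\mathbb{N}$, $a>0$, and let $V$ be smooth with $V''(a^2)\neq0$. Define $\sigma_m=\operatorname{sgn}(V''(a^2))$ if $m\in[1,n/4)$ and $\sigma_m=-\operatorname{sgn}(V''(a^2))$ if $m\in(n/4,n/2]$. If $\sigma_m<0$, or $\sigma_m>0$ and $\phi_1(a)<1$, then the relative equilibrium $q_j(t)=ae^{i\omega t}e^{ijm\zeta}$ (equivalently the equilibrium $\mathbf{a}_m$ of $\mathcal{J}\dot u=\nabla H(u)$) is linearly stable, i.e. $\mathcal{J}D^2H(\mathbf{a}_m)$ has only purely imaginary eigenvalues.
   Context: Lattice: $i\dot q_j=V'(|q_j|^2)q_j+(q_{j+1}-q_j)+(q_{j-1}-q_j)$, $q_j\in\mathbb{C}$, $q_{j+n}=q_j$, with $\omega=4\sin^2(m\zeta/2)-V'(a^2)$. Identify $\mathbb{C}\cong\mathbb{R}^2$, $J=\begin{pmatrix}0&-1\\1&0\end{pmatrix}$, $\mathcal{J}=\mathrm{diag}(J,\dots,J)$, $H(u)=\frac12\sum_{j=1}^n\{V(|u_j|^2)+\omega|u_j|^2-|u_{j+1}-u_j|^2\}$ for $u\in(\mathbb{R}^2)^n$ (indices mod $n$), so that $q_j=e^{i\omega t}u_j$ turns the lattice into $\mathcal{J}\dot u=\nabla H(u)$. $\mathbf{a}_m=(a_1,\dots,a_n)$ with $a_j=ae^{jm\zeta J}e_1$. Also $\alpha_1=4\cos(m\zeta)\sin^2(\zeta/2)$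 and $\phi_1(a)=\frac{2a^2}{\alpha_1}V''(a^2)$. *)

theory Defs
  imports "HOL-Analysis.Derivative" "Jordan_Normal_Form.Char_Poly"
begin

definition smooth_fun :: "(real \<Rightarrow> real) \<Rightarrow> bool" where
  "smooth_fun V \<longleftrightarrow> (\<forall>k x. ((deriv ^^ k) V) differentiable (at x))"

text \<open>A point of (R^2)^n is encoded as x :: nat => real, where u_j = (x (2j), x (2j+1)),
  j = 0..n-1, indices of u taken mod n.\<close>

definition lat_omega :: "(real \<Rightarrow> real) \<Rightarrow> nat \<Rightarrow> nat \<Rightarrow> real \<Rightarrow> real" where
  "lat_omega V n m a = 4 * (sin (real m * (2 * pi / real n) / 2))\<^sup>2 - deriv V (a\<^sup>2)"

definition lat_H :: "(real \<Rightarrow> real) \<Rightarrow> nat \<Rightarrow> real \<Rightarrow> (nat \<Rightarrow> real) \<Rightarrow> real" where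
  "lat_H V n \<omega> x = (1/2) * (\<Sum>j<n.
      V ((x (2*j))\<^sup>2 + (x (2*j+1))\<^sup>2) + \<omega> * ((x (2*j))\<^sup>2 + (x (2*j+1))\<^sup>2)
      - ((x (2*((j+1) mod n)) - x (2*j))\<^sup>2 + (x (2*((j+1) mod n)+1) - x (2*j+1))\<^sup>2))"

definition partial :: "nat \<Rightarrow> ((nat \<Rightarrow> real) \<Rightarrow> real) \<Rightarrow> (nat \<Rightarrow> real) \<Rightarrow> real" where
  "partial k f x = deriv (\<lambda>s. f (x(k := x k + s))) 0"

definition hessian_mat :: "nat \<Rightarrow> ((nat \<Rightarrow> real) \<Rightarrow> real) \<Rightarrow> (nat \<Rightarrow> real) \<Rightarrow> real mat" where
  "hessian_mat N f x = mat N N (\<lambda>(k, l). partial l (partial k f) x)"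

text \<open>The symplectic matrix diag(J,...,J), J = [[0,-1],[1,0]], of size 2n.\<close>
definition sympl_J :: "nat \<Rightarrow> real mat" where
  "sympl_J n = mat (2*n) (2*n) (\<lambda>(k, l).
      if k div 2 = l div 2 then (if even k \<and> odd l then -1 else if odd k \<and> even l then 1 else 0)
      else 0)"

definition eq_am :: "nat \<Rightarrow> nat \<Rightarrow> real \<Rightarrow> nat \<Rightarrow> real" where
  "eq_am n m a k = (if even k then a * cos (real (k div 2) * real m * (2 * pi / real n))
                    else a * sin (real (k div 2) * real m * (2 * pi / real n)))"

definition alpha1 :: "nat \<Rightarrow> nat \<Rightarrow> real" where
  "alpha1 n m = 4 * cos (real m * (2 * pi / real n)) * (sin ((2 * pi / real n) / 2))\<^sup>2"

definition phi1 :: "(real \<Rightarrow> real) \<Rightarrow> nat \<Rightarrow> nat \<Rightarrow> real \<Rightarrow> real" where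
  "phi1 V n m a = 2 * a\<^sup>2 / alpha1 n m * deriv (deriv V) (a\<^sup>2)"

definition sigma_m :: "(real \<Rightarrow> real) \<Rightarrow> nat \<Rightarrow> nat \<Rightarrow> real \<Rightarrow> real" where
  "sigma_m V n m a = (if real m < real n / 4 then sgn (deriv (deriv V) (a\<^sup>2))
                      else - sgn (deriv (deriv V) (a\<^sup>2)))"

definition linearly_stable :: "(real \<Rightarrow> real) \<Rightarrow> nat \<Rightarrow> nat \<Rightarrow> real \<Rightarrow> bool" where
  "linearly_stable V n m a \<longleftrightarrow>
     (\<forall>ev::complex. eigenvalue (map_mat complex_of_real
         (sympl_J n * hessian_mat (2*n) (lat_H V n (lat_omega V n m a)) (eq_am n m a))) ev
       \<longrightarrow> Re ev = 0)"

end

theory Submission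
  imports Defs
begin



definition ind :: "nat \<Rightarrow> nat \<Rightarrow> real" where "ind i k = (if i = k then 1 else 0)"

definition Gk :: "(real \<Rightarrow> real) \<Rightarrow> nat \<Rightarrow> real \<Rightarrow> nat \<Rightarrow> (nat \<Rightarrow> real) \<Rightarrow> real" where
 "Gk V n w k x = (\<Sum>j<n. (deriv V ((x (2*j))\<^sup>2 + (x (2*j+1))\<^sup>2) + w) * (x (2*j) * ind (2*j) k + x (2*j+1) * ind (2*j+1) k)
     - (x (2*((j+1) mod n)) - x (2*j)) * (ind (2*((j+1) mod n)) k - ind (2*j) k)
     - (x (2*((j+1) mod n)+1) - x (2*j+1)) * (ind (2*((j+1) mod n)+1) k - ind (2*j+1) k))"

lemma upd_eq: "x(k := x k + s) = (\<lambda>i. x i + s * ind i k)"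
  by (auto simp: ind_def fun_eq_iff)

lemma V_chain:
  assumes "\<And>y. V differentiable at y" "(f has_real_derivative f') (at s)"
  shows "((\<lambda>s. V (f s)) has_real_derivative (deriv V (f s) * f')) (at s)"
  using DERIV_chain2[OF _ assms(2), of V "deriv V (f s)"] assms(1) DERIV_deriv_iff_real_differentiable by blast

lemma partial_H:
  assumes dV: "\<And>y. V differentiable at y"
  shows "partial k (lat_H V n w) x = Gk V n w k x"
proof -
  have "((\<lambda>s. lat_H V n w (\<lambda>i. x i + s * ind i k)) has_real_derivative Gk V n w k x) (at 0)"
    unfolding lat_H_def
    apply (rule derivative_eq_intros V_chain[OF dV] refl)+
    apply (simp add: Gk_def sum_distrib_right)
    apply (rule sum.cong, simp)
    apply (simp add: algebra_simps)
    done
  then show ?thesis unfolding partial_def upd_eq by (rule DERIV_imp_deriv)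
qed

definition Hs :: "(real \<Rightarrow> real) \<Rightarrow> nat \<Rightarrow> real \<Rightarrow> nat \<Rightarrow> nat \<Rightarrow> (nat \<Rightarrow> real) \<Rightarrow> real" where
 "Hs V n w k l x = (\<Sum>j<n. deriv (deriv V) ((x (2*j))\<^sup>2 + (x (2*j+1))\<^sup>2) * (2 * x (2*j) * ind (2*j) l + 2 * x (2*j+1) * ind (2*j+1) l)
       * (x (2*j) * ind (2*j) k + x (2*j+1) * ind (2*j+1) k)
     + (deriv V ((x (2*j))\<^sup>2 + (x (2*j+1))\<^sup>2) + w) * (ind (2*j) l * ind (2*j) k + ind (2*j+1) l * ind (2*j+1) k)
     - (ind (2*((j+1) mod n)) l - ind (2*j) l) * (ind (2*((j+1) mod n)) k - ind (2*j) k)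
     - (ind (2*((j+1) mod n)+1) l - ind (2*j+1) l) * (ind (2*((j+1) mod n)+1) k - ind (2*j+1) k))"

lemma hess_entry:
  assumes dV: "\<And>y. V differentiable at y" and dV': "\<And>y. deriv V differentiable at y"
  shows "partial l (partial k (lat_H V n w)) x = Hs V n w k l x"
proof -
  have e: "partial k (lat_H V n w) = Gk V n w k" using partial_H[OF dV] by (simp add: fun_eq_iff)
  have "((\<lambda>s. Gk V n w k (\<lambda>i. x i + s * ind i l)) has_real_derivative Hs V n w k l x) (at 0)"
    unfolding Gk_def
    apply (rule derivative_eq_intros V_chain[OF dV'] refl)+
    apply (simp add: Hs_def)
    apply (rule sum.cong, simp)
    apply (simp add: algebra_simps)
    done
  then show ?thesis unfolding partial_def upd_eq e by (rule DERIV_imp_deriv)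
qed

lemma bilin_term:
  fixes t v :: "nat \<Rightarrow> complex"
  assumes "a < N" "b < N"
  shows "(\<Sum>q<N. \<Sum>l<N. t q * (complex_of_real (ind a q * ind b l)) * v l) = t a * v b"
proof -
  have "\<And>q l. t q * (complex_of_real (ind a q * ind b l)) * v l = (if l = b then (if q = a then t a * v b else 0) else 0)"
    by (simp add: ind_def)
  then show ?thesis using assms by (simp add: sum.delta')
qed

lemma bilin_gen:
  fixes t v :: "nat \<Rightarrow> complex"
  shows "(\<Sum>q<N. \<Sum>l<N. t q * (A q l + B q l) * v l) = (\<Sum>q<N. \<Sum>l<N. t q * A q l * v l) + (\<Sum>q<N. \<Sum>l<N. t q * B q l * v l)"
    "(\<Sum>q<N. \<Sum>l<N. t q * (A q l - B q l) * v l) = (\<Sum>q<N. \<Sum>l<N. t q * A q l * v l) - (\<Sum>q<N. \<Sum>l<N. t q * B q l * v l)"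
    "(\<Sum>q<N. \<Sum>l<N. t q * (c * A q l) * v l) = c * (\<Sum>q<N. \<Sum>l<N. t q * A q l * v l)"
  by (simp_all add: algebra_simps sum.distrib sum_subtractf sum_distrib_left)


lemma Tj_bilin:
  fixes t v :: "nat \<Rightarrow> complex"
  assumes "a < N" "b < N" "a' < N" "b' < N"
  shows "(\<Sum>q<N. \<Sum>l<N. t q * complex_of_real (D * (2*xa*ind a l + 2*xb*ind b l) * (xa*ind a q + xb*ind b q)
      + c*(ind a l*ind a q + ind b l*ind b q) - (ind a' l - ind a l)*(ind a' q - ind a q) - (ind b' l - ind b l)*(ind b' q - ind b q)) * v l)
   = complex_of_real (2*D) * (complex_of_real xa * v a + complex_of_real xb * v b) * (complex_of_real xa * t a + complex_of_real xb * t b)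
     + complex_of_real c * (t a * v a + t b * v b) - (t a' - t a) * (v a' - v a) - (t b' - t b) * (v b' - v b)"
proof -
  let ?i = "\<lambda>p r q l. complex_of_real (ind p q * ind r l)"
  have e: "\<And>q l. complex_of_real (D * (2*xa*ind a l + 2*xb*ind b l) * (xa*ind a q + xb*ind b q)
      + c*(ind a l*ind a q + ind b l*ind b q) - (ind a' l - ind a l)*(ind a' q - ind a q) - (ind b' l - ind b l)*(ind b' q - ind b q))
    = complex_of_real (2*D*xa*xa) * ?i a a q l + complex_of_real (2*D*xa*xb) * ?i b a q l + complex_of_real (2*D*xa*xb) * ?i a b q l
      + complex_of_real (2*D*xb*xb) * ?i b b q l + complex_of_real c * ?i a a q l + complex_of_real c * ?i b b q l
      - ?i a' a' q l + ?i a a' q l + ?i a' a q l - ?i a a q l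
      - ?i b' b' q l + ?i b b' q l + ?i b' b q l - ?i b b q l"
    by (simp add: algebra_simps)
  have e2: "\<And>q l. ?i a' a' q l = 1 * ?i a' a' q l" "\<And>q l. ?i a a' q l = 1 * ?i a a' q l" 
     "\<And>q l. ?i a' a q l = 1 * ?i a' a q l" "\<And>q l. ?i b' b' q l = 1 * ?i b' b' q l"
     "\<And>q l. ?i b b' q l = 1 * ?i b b' q l" "\<And>q l. ?i b' b q l = 1 * ?i b' b q l"
     "\<And>q l. ?i a a q l = 1 * ?i a a q l" "\<And>q l. ?i b b q l = 1 * ?i b b q l" by simp_all
  show ?thesis
    apply (simp only: e)
    apply (simp only: bilin_gen)
    apply (simp only: bilin_term[OF assms(1) assms(1)] bilin_term[OF assms(1) assms(2)] bilin_term[OF assms(1) assms(3)] bilin_term[OF assms(1) assms(4)] bilin_term[OF assms(2) assms(1)] bilin_term[OF assms(2) assms(2)] bilin_term[OF assms(2) assms(3)] bilin_term[OF assms(2) assms(4)] bilin_term[OF assms(3) assms(1)] bilin_term[OF assms(3) assms(2)] bilin_term[OF assms(3) assms(3)] bilin_term[OF assms(3) assms(4)] bilin_term[OF assms(4) assms(1)] bilin_term[OF assms(4) assms(2)] bilin_term[OF assms(4) assms(3)] bilin_term[OF assms(4) assms(4)])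
    apply (simp add: algebra_simps)
    done
qed


lemma swap3: "(\<Sum>q\<in>A. \<Sum>l\<in>B. \<Sum>j\<in>C. g q l j) = (\<Sum>j\<in>C. \<Sum>q\<in>A. \<Sum>l\<in>B. g q l j)"
proof -
  have "\<And>q. (\<Sum>l\<in>B. \<Sum>j\<in>C. g q l j) = (\<Sum>j\<in>C. \<Sum>l\<in>B. g q l j)" by (rule sum.swap)
  then have "(\<Sum>q\<in>A. \<Sum>l\<in>B. \<Sum>j\<in>C. g q l j) = (\<Sum>q\<in>A. \<Sum>j\<in>C. \<Sum>l\<in>B. g q l j)" by simp
  also have "\<dots> = (\<Sum>j\<in>C. \<Sum>q\<in>A. \<Sum>l\<in>B. g q l j)" by (rule sum.swap)
  finally show ?thesis .
qed

lemma pull_sum: "t * complex_of_real (\<Sum>j\<in>C. f j) * v = (\<Sum>j\<in>C. t * complex_of_real (f j) * v)"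
  by (simp add: of_real_sum sum_distrib_left sum_distrib_right)

lemma Hs_bilin:
  fixes t v :: "nat \<Rightarrow> complex"
  assumes "0 < n"
  shows "(\<Sum>q<2*n. \<Sum>l<2*n. t q * complex_of_real (Hs V n w q l x) * v l)
   = (\<Sum>j<n. complex_of_real (2*deriv (deriv V) ((x (2*j))\<^sup>2 + (x (2*j+1))\<^sup>2))
        * (complex_of_real (x (2*j)) * v (2*j) + complex_of_real (x (2*j+1)) * v (2*j+1))
        * (complex_of_real (x (2*j)) * t (2*j) + complex_of_real (x (2*j+1)) * t (2*j+1))
     + complex_of_real (deriv V ((x (2*j))\<^sup>2 + (x (2*j+1))\<^sup>2) + w) * (t (2*j) * v (2*j) + t (2*j+1) * v (2*j+1))
     - (t (2*((j+1) mod n)) - t (2*j)) * (v (2*((j+1) mod n)) - v (2*j))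
     - (t (2*((j+1) mod n)+1) - t (2*j+1)) * (v (2*((j+1) mod n)+1) - v (2*j+1)))" (is "?lhs = ?rhs")
proof -
  have "(\<Sum>q<2*n. \<Sum>l<2*n. t q * complex_of_real (Hs V n w q l x) * v l)
    = (\<Sum>q<2*n. \<Sum>l<2*n. \<Sum>j<n. t q * complex_of_real (deriv (deriv V) ((x (2*j))\<^sup>2 + (x (2*j+1))\<^sup>2) * (2 * x (2*j) * ind (2*j) l + 2 * x (2*j+1) * ind (2*j+1) l)
       * (x (2*j) * ind (2*j) q + x (2*j+1) * ind (2*j+1) q)
     + (deriv V ((x (2*j))\<^sup>2 + (x (2*j+1))\<^sup>2) + w) * (ind (2*j) l * ind (2*j) q + ind (2*j+1) l * ind (2*j+1) q)
     - (ind (2*((j+1) mod n)) l - ind (2*j) l) * (ind (2*((j+1) mod n)) q - ind (2*j) q)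
     - (ind (2*((j+1) mod n)+1) l - ind (2*j+1) l) * (ind (2*((j+1) mod n)+1) q - ind (2*j+1) q)) * v l)"
    unfolding Hs_def pull_sum ..
  also have "\<dots> = (\<Sum>j<n. \<Sum>q<2*n. \<Sum>l<2*n. t q * complex_of_real (deriv (deriv V) ((x (2*j))\<^sup>2 + (x (2*j+1))\<^sup>2) * (2 * x (2*j) * ind (2*j) l + 2 * x (2*j+1) * ind (2*j+1) l)
       * (x (2*j) * ind (2*j) q + x (2*j+1) * ind (2*j+1) q)
     + (deriv V ((x (2*j))\<^sup>2 + (x (2*j+1))\<^sup>2) + w) * (ind (2*j) l * ind (2*j) q + ind (2*j+1) l * ind (2*j+1) q)
     - (ind (2*((j+1) mod n)) l - ind (2*j) l) * (ind (2*((j+1) mod n)) q - ind (2*j) q)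
     - (ind (2*((j+1) mod n)+1) l - ind (2*j+1) l) * (ind (2*((j+1) mod n)+1) q - ind (2*j+1) q)) * v l)"
    by (rule swap3)
  also have "\<dots> = ?rhs"
  proof (rule sum.cong[OF refl])
    fix j assume "j \<in> {..<n}"
    then have j: "2*j < 2*n" "2*j+1 < 2*n" "2*((j+1) mod n) < 2*n" "2*((j+1) mod n)+1 < 2*n"
    proof -
      have "(j+1) mod n < n" "j < n" using assms \<open>j \<in> {..<n}\<close> by auto
      then show "2*j < 2*n" "2*j+1 < 2*n" "2*((j+1) mod n) < 2*n" "2*((j+1) mod n)+1 < 2*n" by linarith+
    qed
    show "(\<Sum>q<2*n. \<Sum>l<2*n. t q * complex_of_real (deriv (deriv V) ((x (2*j))\<^sup>2 + (x (2*j+1))\<^sup>2) * (2 * x (2*j) * ind (2*j) l + 2 * x (2*j+1) * ind (2*j+1) l)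
       * (x (2*j) * ind (2*j) q + x (2*j+1) * ind (2*j+1) q)
     + (deriv V ((x (2*j))\<^sup>2 + (x (2*j+1))\<^sup>2) + w) * (ind (2*j) l * ind (2*j) q + ind (2*j+1) l * ind (2*j+1) q)
     - (ind (2*((j+1) mod n)) l - ind (2*j) l) * (ind (2*((j+1) mod n)) q - ind (2*j) q)
     - (ind (2*((j+1) mod n)+1) l - ind (2*j+1) l) * (ind (2*((j+1) mod n)+1) q - ind (2*j+1) q)) * v l) = 
     complex_of_real (2*deriv (deriv V) ((x (2*j))\<^sup>2 + (x (2*j+1))\<^sup>2))
        * (complex_of_real (x (2*j)) * v (2*j) + complex_of_real (x (2*j+1)) * v (2*j+1))
        * (complex_of_real (x (2*j)) * t (2*j) + complex_of_real (x (2*j+1)) * t (2*j+1))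
     + complex_of_real (deriv V ((x (2*j))\<^sup>2 + (x (2*j+1))\<^sup>2) + w) * (t (2*j) * v (2*j) + t (2*j+1) * v (2*j+1))
     - (t (2*((j+1) mod n)) - t (2*j)) * (v (2*((j+1) mod n)) - v (2*j))
     - (t (2*((j+1) mod n)+1) - t (2*j+1)) * (v (2*((j+1) mod n)+1) - v (2*j+1))"
      by (rule Tj_bilin[OF j])
  qed
  finally show ?thesis .
qed

lemma J_mult_entry:
  assumes "i < 2*n" "l < 2*n" "B \<in> carrier_mat (2*n) (2*n)"
  shows "(sympl_J n * B) $$ (i,l) = (if even i then - B $$ (i+1,l) else B $$ (i-1,l))"
proof -
  have dJ: "dim_row (sympl_J n) = 2*n" "dim_col (sympl_J n) = 2*n" by (simp_all add: sympl_J_def)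
  have "(sympl_J n * B) $$ (i,l) = (\<Sum>q\<in>{0..<2*n}. sympl_J n $$ (i,q) * B $$ (q,l))"
    using assms dJ by (simp add: index_mult_mat scalar_prod_def)
  also have "\<dots> = (\<Sum>q\<in>{0..<2*n}. if q = (if even i then i+1 else i-1) then (if even i then - B $$ (q,l) else B $$ (q,l)) else 0)"
  proof (rule sum.cong[OF refl])
    fix q assume q: "q \<in> {0..<2*n}"
    have "sympl_J n $$ (i,q) = (if i div 2 = q div 2 then (if even i \<and> odd q then -1 else if odd i \<and> even q then 1 else 0) else 0)"
      using q assms by (simp add: sympl_J_def)
    moreover have "(i div 2 = q div 2 \<and> even i \<and> odd q) \<longleftrightarrow> (even i \<and> q = i+1)" by presburger
    moreover have "(i div 2 = q div 2 \<and> odd i \<and> even q) \<longleftrightarrow> (odd i \<and> q = i-1)" by presburger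
    ultimately show "sympl_J n $$ (i,q) * B $$ (q,l) = (if q = (if even i then i+1 else i-1) then (if even i then - B $$ (q,l) else B $$ (q,l)) else 0)"
      by auto
  qed
  also have "\<dots> = (if even i then - B $$ (i+1,l) else B $$ (i-1,l))"
  proof -
    have "even i \<Longrightarrow> i + 1 < 2*n" using assms(1) by presburger
    then have "(if even i then i+1 else i-1) \<in> {0..<2*n}" using assms by auto
    then show ?thesis by (simp add: sum.delta)
  qed
  finally show ?thesis .
qed

lemma sum_split2: "(\<Sum>q<2*(n::nat). f q) = (\<Sum>p<n. f (2*p) + f (2*p+1))"
  by (induction n) (simp_all add: algebra_simps)


lemma eig_test:
  fixes v :: "complex vec" and t :: "nat \<Rightarrow> complex"
  assumes n: "0 < n" and dV: "\<And>y. V differentiable at y" and dV': "\<And>y. deriv V differentiable at y"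
    and vc: "v \<in> carrier_vec (2*n)"
    and eq: "map_mat complex_of_real (sympl_J n * hessian_mat (2*n) (lat_H V n w) x) *\<^sub>v v = ev \<cdot>\<^sub>v v"
  shows "(\<Sum>q<2*n. \<Sum>l<2*n. t q * complex_of_real (Hs V n w q l x) * vec_index v l)
       = ev * (\<Sum>p<n. t (2*p) * vec_index v (2*p+1) - t (2*p+1) * vec_index v (2*p))"
proof -
  let ?Hm = "hessian_mat (2*n) (lat_H V n w) x"
  have Hc: "?Hm \<in> carrier_mat (2*n) (2*n)" by (simp add: hessian_mat_def)
  have He: "\<And>k l. k<2*n \<Longrightarrow> l<2*n \<Longrightarrow> ?Hm $$ (k,l) = Hs V n w k l x"
    by (simp add: hessian_mat_def hess_entry[OF dV dV'])
  define u where "u q = (\<Sum>l<2*n. complex_of_real (Hs V n w q l x) * vec_index v l)" for q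
  have row: "vec_index (map_mat complex_of_real (sympl_J n * ?Hm) *\<^sub>v v) i = (if even i then - u (i+1) else u (i-1))"
    if i: "i < 2*n" for i
  proof -
    have dims: "dim_row (sympl_J n * ?Hm) = 2*n" "dim_col (sympl_J n * ?Hm) = 2*n" "dim_vec v = 2*n"
      using vc by (simp_all add: sympl_J_def hessian_mat_def)
    have ev1: "even i \<Longrightarrow> i + 1 < 2*n" using i by presburger
    have "vec_index (map_mat complex_of_real (sympl_J n * ?Hm) *\<^sub>v v) i
        = (\<Sum>l\<in>{0..<2*n}. complex_of_real ((sympl_J n * ?Hm) $$ (i,l)) * vec_index v l)"
      using i dims by (simp add: scalar_prod_def)
    also have "\<dots> = (\<Sum>l<2*n. complex_of_real (if even i then - Hs V n w (i+1) l x else Hs V n w (i-1) l x) * vec_index v l)"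
      unfolding atLeast0LessThan
    proof (rule sum.cong[OF refl])
      fix l assume l: "l \<in> {..<2*n}"
      show "complex_of_real ((sympl_J n * ?Hm) $$ (i,l)) * vec_index v l = complex_of_real (if even i then - Hs V n w (i+1) l x else Hs V n w (i-1) l x) * vec_index v l"
        using J_mult_entry[OF i _ Hc, of l] l He ev1 i by auto
    qed
    also have "\<dots> = (if even i then - u (i+1) else u (i-1))"
      by (cases "even i") (simp_all add: u_def sum_negf)
    finally show ?thesis .
  qed
  have e1: "u (2*p) = ev * vec_index v (2*p+1)" and e2: "u (2*p+1) = - (ev * vec_index v (2*p))" if p: "p < n" for p
  proof -
    have "2*p+1 < 2*n" "2*p < 2*n" using p by auto
    then have "vec_index (ev \<cdot>\<^sub>v v) (2*p+1) = ev * vec_index v (2*p+1)" "vec_index (ev \<cdot>\<^sub>v v) (2*p) = ev * vec_index v (2*p)" using vc by auto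
    then show "u (2*p) = ev * vec_index v (2*p+1)" "u (2*p+1) = - (ev * vec_index v (2*p))"
      using row[OF \<open>2*p+1 < 2*n\<close>] row[OF \<open>2*p < 2*n\<close>] eq by auto
  qed
  have "(\<Sum>q<2*n. \<Sum>l<2*n. t q * complex_of_real (Hs V n w q l x) * vec_index v l) = (\<Sum>q<2*n. t q * u q)"
    by (simp add: u_def sum_distrib_left mult.assoc)
  also have "\<dots> = (\<Sum>p<n. t (2*p) * u (2*p) + t (2*p+1) * u (2*p+1))" by (rule sum_split2)
  also have "\<dots> = (\<Sum>p<n. ev * (t (2*p) * vec_index v (2*p+1) - t (2*p+1) * vec_index v (2*p)))"
  proof (rule sum.cong[OF refl])
    fix p assume "p \<in> {..<n}"
    then have "p < n" by simp
    show "t (2*p) * u (2*p) + t (2*p+1) * u (2*p+1) = ev * (t (2*p) * vec_index v (2*p+1) - t (2*p+1) * vec_index v (2*p))"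
      unfolding e1[OF \<open>p<n\<close>] e2[OF \<open>p<n\<close>] by (simp add: right_diff_distrib)
  qed
  also have "\<dots> = ev * (\<Sum>p<n. t (2*p) * vec_index v (2*p+1) - t (2*p+1) * vec_index v (2*p))" by (simp add: sum_distrib_left)
  finally show ?thesis .
qed




lemma shift_sum: fixes f :: "nat \<Rightarrow> 'a::ab_group_add" shows "f n = f 0 \<Longrightarrow> (\<Sum>j<n. f (Suc j)) = (\<Sum>j<n. f j)"
proof -
  assume h: "f n = f 0"
  have "(\<Sum>j<Suc n. f j) = f 0 + (\<Sum>j<n. f (Suc j))" by (rule sum.lessThan_Suc_shift)
  moreover have "(\<Sum>j<Suc n. f j) = (\<Sum>j<n. f j) + f n" by simp
  ultimately have "f 0 + (\<Sum>j<n. f (Suc j)) = f 0 + (\<Sum>j<n. f j)" using h by (simp add: add.commute)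
  then show ?thesis by simp
qed

lemma lap_gen:
  fixes vv vw E :: "nat \<Rightarrow> complex" and A :: "nat \<Rightarrow> real" and p0 q0 em ep :: complex
  assumes A: "\<And>j. A (Suc j) = A j + th" and E: "\<And>j. E (Suc j) = E j * em" and emp: "em * ep = 1"
    and per: "E n = E 0" "cos (A n) = cos (A 0)" "sin (A n) = sin (A 0)" "vv n = vv 0" "vw n = vw 0"
  defines "P \<equiv> (\<Sum>j<n. E j * (complex_of_real (cos (A j)) * vv j + complex_of_real (sin (A j)) * vw j))"
    and "Q \<equiv> (\<Sum>j<n. E j * (- complex_of_real (sin (A j)) * vv j + complex_of_real (cos (A j)) * vw j))"
    and "c \<equiv> complex_of_real (cos th)" and "sn \<equiv> complex_of_real (sin th)"
  defines "t0 \<equiv> (\<lambda>j. E j * (p0 * complex_of_real (cos (A j)) - q0 * complex_of_real (sin (A j))))"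
    and "t1 \<equiv> (\<lambda>j. E j * (p0 * complex_of_real (sin (A j)) + q0 * complex_of_real (cos (A j))))"
  shows "(\<Sum>j<n. (t0 (Suc j) - t0 j) * (vv (Suc j) - vv j) + (t1 (Suc j) - t1 j) * (vw (Suc j) - vw j))
     = 2 * (p0 * P + q0 * Q) - em * (c * (p0 * P + q0 * Q) + sn * (p0 * Q - q0 * P))
         - ep * (c * (p0 * P + q0 * Q) - sn * (p0 * Q - q0 * P))"
proof -
  define f where "f j = t0 j * vv j + t1 j * vw j" for j
  define g1 where "g1 j = t0 (Suc j) * vv j + t1 (Suc j) * vw j" for j
  define h where "h i = ep * E i * ((p0 * complex_of_real (cos (A i - th)) - q0 * complex_of_real (sin (A i - th))) * vv i
       + (p0 * complex_of_real (sin (A i - th)) + q0 * complex_of_real (cos (A i - th))) * vw i)" for i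
  have split: "(\<Sum>j<n. (t0 (Suc j) - t0 j) * (vv (Suc j) - vv j) + (t1 (Suc j) - t1 j) * (vw (Suc j) - vw j))
     = (\<Sum>j<n. f (Suc j)) + (\<Sum>j<n. f j) - (\<Sum>j<n. g1 j) - (\<Sum>j<n. h (Suc j))"
  proof -
    have ht: "h (Suc j) = t0 j * vv (Suc j) + t1 j * vw (Suc j)" for j
    proof -
      have "A (Suc j) - th = A j" using A by simp
      moreover have "ep * E (Suc j) = E j" using E emp by (simp add: algebra_simps)
      ultimately show ?thesis unfolding h_def t0_def t1_def by (simp add: algebra_simps)
    qed
    have "(\<Sum>j<n. (t0 (Suc j) - t0 j) * (vv (Suc j) - vv j) + (t1 (Suc j) - t1 j) * (vw (Suc j) - vw j))
       = (\<Sum>j<n. f (Suc j) + f j - g1 j - h (Suc j))"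
      by (rule sum.cong[OF refl]) (simp add: ht f_def g1_def ring_distribs)
    then show ?thesis by (simp add: sum.distrib sum_subtractf)
  qed
  have s1: "(\<Sum>j<n. f (Suc j)) = (\<Sum>j<n. f j)"
    by (rule shift_sum) (simp add: f_def t0_def t1_def per)
  have s2: "(\<Sum>j<n. f j) = p0 * P + q0 * Q"
    unfolding f_def P_def Q_def t0_def t1_def by (simp add: sum_distrib_left sum.distrib[symmetric] algebra_simps)
  have s3: "(\<Sum>j<n. g1 j) = em * (c * (p0 * P + q0 * Q) + sn * (p0 * Q - q0 * P))"
    unfolding g1_def P_def Q_def t0_def t1_def c_def sn_def
    by (simp add: E A cos_add sin_add sum_distrib_left sum.distrib[symmetric] sum_subtractf[symmetric] algebra_simps)
  have s4: "(\<Sum>j<n. h (Suc j)) = (\<Sum>j<n. h j)"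
    by (rule shift_sum) (simp add: h_def per cos_diff sin_diff)
  have s5: "(\<Sum>j<n. h j) = ep * (c * (p0 * P + q0 * Q) - sn * (p0 * Q - q0 * P))"
    unfolding h_def P_def Q_def c_def sn_def
    by (simp add: cos_diff sin_diff sum_distrib_left sum.distrib[symmetric] sum_subtractf[symmetric] algebra_simps)
  show ?thesis unfolding split s1 s2 s3 s4 s5 by (simp only: mult_2)
qed

lemma mod_suc_per:
  assumes "j < n" "f n = f 0"
  shows "f ((j+1) mod n) = f (Suc j)"
proof (cases "j + 1 = n")
  case True then show ?thesis using assms by simp
next
  case False then have "j+1 < n" using assms by simp
  then show ?thesis by simp
qed

lemma mode_equation:
  fixes v :: "nat \<Rightarrow> complex" and E :: "nat \<Rightarrow> complex" and A :: "nat \<Rightarrow> real" and p0 q0 em ep ev :: complex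
    and D a s :: real
  assumes n: "0 < n"
    and A: "\<And>j. A (Suc j) = A j + th" and E: "\<And>j. E (Suc j) = E j * em" and emp: "em * ep = 1"
    and per: "E n = E 0" "cos (A n) = cos (A 0)" "sin (A n) = sin (A 0)"
    and H: "\<And>t. (\<Sum>j<n. complex_of_real (2*D) * (complex_of_real (a*cos (A j)) * v (2*j) + complex_of_real (a* sin (A j)) * v (2*j+1))
        * (complex_of_real (a*cos (A j)) * t (2*j) + complex_of_real (a* sin (A j)) * t (2*j+1))
      + complex_of_real s * (t (2*j) * v (2*j) + t (2*j+1) * v (2*j+1))
      - (t (2*((j+1) mod n)) - t (2*j)) * (v (2*((j+1) mod n)) - v (2*j))
      - (t (2*((j+1) mod n)+1) - t (2*j+1)) * (v (2*((j+1) mod n)+1) - v (2*j+1)))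
      = ev * (\<Sum>j<n. t (2*j) * v (2*j+1) - t (2*j+1) * v (2*j))"
  defines "P \<equiv> (\<Sum>j<n. E j * (complex_of_real (cos (A j)) * v (2*j) + complex_of_real (sin (A j)) * v (2*j+1)))"
    and "Q \<equiv> (\<Sum>j<n. E j * (- complex_of_real (sin (A j)) * v (2*j) + complex_of_real (cos (A j)) * v (2*j+1)))"
    and "c \<equiv> complex_of_real (cos th)" and "sn \<equiv> complex_of_real (sin th)"
  shows "complex_of_real (2*D*a^2) * p0 * P + complex_of_real s * (p0 * P + q0 * Q)
     - (2 * (p0 * P + q0 * Q) - em * (c * (p0 * P + q0 * Q) + sn * (p0 * Q - q0 * P))
         - ep * (c * (p0 * P + q0 * Q) - sn * (p0 * Q - q0 * P)))
     = ev * (p0 * Q - q0 * P)"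
proof -
  define vv where "vv i = v (2*(i mod n))" for i
  define vw where "vw i = v (2*(i mod n)+1)" for i
  define t0 where "t0 j = E j * (p0 * complex_of_real (cos (A j)) - q0 * complex_of_real (sin (A j)))" for j
  define t1 where "t1 j = E j * (p0 * complex_of_real (sin (A j)) + q0 * complex_of_real (cos (A j)))" for j
  define t where "t q = (if even q then t0 (q div 2) else t1 (q div 2))" for q
  have perv: "vv n = vv 0" "vw n = vw 0" by (simp_all add: vv_def vw_def)
  have pert: "t0 n = t0 0" "t1 n = t1 0" by (simp_all add: t0_def t1_def per)
  have P': "P = (\<Sum>j<n. E j * (complex_of_real (cos (A j)) * vv j + complex_of_real (sin (A j)) * vw j))"
    unfolding P_def by (rule sum.cong[OF refl]) (simp add: vv_def vw_def)
  have Q': "Q = (\<Sum>j<n. E j * (- complex_of_real (sin (A j)) * vv j + complex_of_real (cos (A j)) * vw j))"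
    unfolding Q_def by (rule sum.cong[OF refl]) (simp add: vv_def vw_def)
  have lap: "(\<Sum>j<n. (t0 (Suc j) - t0 j) * (vv (Suc j) - vv j) + (t1 (Suc j) - t1 j) * (vw (Suc j) - vw j))
     = 2 * (p0 * P + q0 * Q) - em * (c * (p0 * P + q0 * Q) + sn * (p0 * Q - q0 * P))
         - ep * (c * (p0 * P + q0 * Q) - sn * (p0 * Q - q0 * P))"
    unfolding P' Q' c_def sn_def t0_def t1_def
    by (rule lap_gen[OF A E emp per perv])
  have cs: "\<And>x. complex_of_real (cos x) * complex_of_real (cos x) + complex_of_real (sin x) * complex_of_real (sin x) = 1"
    by (metis of_real_1 of_real_add of_real_mult sin_cos_squared_add3)
  have "(\<Sum>j<n. complex_of_real (2*D) * (complex_of_real (a*cos (A j)) * v (2*j) + complex_of_real (a* sin (A j)) * v (2*j+1))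
        * (complex_of_real (a*cos (A j)) * t (2*j) + complex_of_real (a* sin (A j)) * t (2*j+1))
      + complex_of_real s * (t (2*j) * v (2*j) + t (2*j+1) * v (2*j+1))
      - (t (2*((j+1) mod n)) - t (2*j)) * (v (2*((j+1) mod n)) - v (2*j))
      - (t (2*((j+1) mod n)+1) - t (2*j+1)) * (v (2*((j+1) mod n)+1) - v (2*j+1)))
    = (\<Sum>j<n. complex_of_real (2*D*a^2) * p0 * (E j * (complex_of_real (cos (A j)) * vv j + complex_of_real (sin (A j)) * vw j))
       + complex_of_real s * (p0 * (E j * (complex_of_real (cos (A j)) * vv j + complex_of_real (sin (A j)) * vw j))
            + q0 * (E j * (- complex_of_real (sin (A j)) * vv j + complex_of_real (cos (A j)) * vw j)))
       - ((t0 (Suc j) - t0 j) * (vv (Suc j) - vv j) + (t1 (Suc j) - t1 j) * (vw (Suc j) - vw j)))"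
  proof (rule sum.cong[OF refl])
    fix j assume "j \<in> {..<n}"
    then have j: "j < n" by simp
    have a1: "t (2*((j+1) mod n)) = t0 (Suc j)" "t (2*((j+1) mod n)+1) = t1 (Suc j)"
      using mod_suc_per[OF j pert(1)] mod_suc_per[OF j pert(2)] by (simp_all add: t_def)
    have a2: "v (2*((j+1) mod n)) = vv (Suc j)" "v (2*((j+1) mod n)+1) = vw (Suc j)" by (simp_all add: vv_def vw_def)
    have a3: "v (2*j) = vv j" "v (2*j+1) = vw j" "t (2*j) = t0 j" "t (2*j+1) = t1 j"
      using j by (simp_all add: vv_def vw_def t_def)
    have key: "complex_of_real (a*cos (A j)) * t0 j + complex_of_real (a* sin (A j)) * t1 j = complex_of_real a * p0 * E j"
    proof -
      have "complex_of_real (a*cos (A j)) * t0 j + complex_of_real (a* sin (A j)) * t1 j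
        = complex_of_real a * p0 * E j * (complex_of_real (cos (A j)) * complex_of_real (cos (A j)) + complex_of_real (sin (A j)) * complex_of_real (sin (A j)))"
        unfolding t0_def t1_def by (simp add: ring_distribs mult.assoc mult.left_commute)
      then show ?thesis using cs by simp
    qed
    show "complex_of_real (2*D) * (complex_of_real (a*cos (A j)) * v (2*j) + complex_of_real (a* sin (A j)) * v (2*j+1))
        * (complex_of_real (a*cos (A j)) * t (2*j) + complex_of_real (a* sin (A j)) * t (2*j+1))
      + complex_of_real s * (t (2*j) * v (2*j) + t (2*j+1) * v (2*j+1))
      - (t (2*((j+1) mod n)) - t (2*j)) * (v (2*((j+1) mod n)) - v (2*j))
      - (t (2*((j+1) mod n)+1) - t (2*j+1)) * (v (2*((j+1) mod n)+1) - v (2*j+1))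
      = complex_of_real (2*D*a^2) * p0 * (E j * (complex_of_real (cos (A j)) * vv j + complex_of_real (sin (A j)) * vw j))
       + complex_of_real s * (p0 * (E j * (complex_of_real (cos (A j)) * vv j + complex_of_real (sin (A j)) * vw j))
            + q0 * (E j * (- complex_of_real (sin (A j)) * vv j + complex_of_real (cos (A j)) * vw j)))
       - ((t0 (Suc j) - t0 j) * (vv (Suc j) - vv j) + (t1 (Suc j) - t1 j) * (vw (Suc j) - vw j))"
      unfolding a1 a2 a3 key
      by (simp add: t0_def t1_def ring_distribs power2_eq_square mult.assoc mult.left_commute)
  qed
  also have "\<dots> = complex_of_real (2*D*a^2) * p0 * P + complex_of_real s * (p0 * P + q0 * Q)
     - (2 * (p0 * P + q0 * Q) - em * (c * (p0 * P + q0 * Q) + sn * (p0 * Q - q0 * P))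
         - ep * (c * (p0 * P + q0 * Q) - sn * (p0 * Q - q0 * P)))"
  proof -
    have gen: "\<And>f g h. (\<Sum>j<n. complex_of_real (2*D*a^2) * p0 * f j + complex_of_real s * (p0 * f j + q0 * g j) - h j)
       = complex_of_real (2*D*a^2) * p0 * (\<Sum>j<n. f j) + complex_of_real s * (p0 * (\<Sum>j<n. f j) + q0 * (\<Sum>j<n. g j)) - (\<Sum>j<n. h j)"
      by (simp add: sum.distrib sum_subtractf sum_distrib_left[symmetric] distrib_left)
    show ?thesis unfolding gen unfolding P'[symmetric] Q'[symmetric] lap ..
  qed
  finally have L: "(\<Sum>j<n. complex_of_real (2*D) * (complex_of_real (a*cos (A j)) * v (2*j) + complex_of_real (a* sin (A j)) * v (2*j+1))
        * (complex_of_real (a*cos (A j)) * t (2*j) + complex_of_real (a* sin (A j)) * t (2*j+1))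
      + complex_of_real s * (t (2*j) * v (2*j) + t (2*j+1) * v (2*j+1))
      - (t (2*((j+1) mod n)) - t (2*j)) * (v (2*((j+1) mod n)) - v (2*j))
      - (t (2*((j+1) mod n)+1) - t (2*j+1)) * (v (2*((j+1) mod n)+1) - v (2*j+1))) = 
     complex_of_real (2*D*a^2) * p0 * P + complex_of_real s * (p0 * P + q0 * Q)
     - (2 * (p0 * P + q0 * Q) - em * (c * (p0 * P + q0 * Q) + sn * (p0 * Q - q0 * P))
         - ep * (c * (p0 * P + q0 * Q) - sn * (p0 * Q - q0 * P)))" .
  have R: "(\<Sum>j<n. t (2*j) * v (2*j+1) - t (2*j+1) * v (2*j)) = p0 * Q - q0 * P"
  proof -
    have "(\<Sum>j<n. t (2*j) * v (2*j+1) - t (2*j+1) * v (2*j))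
       = (\<Sum>j<n. p0 * (E j * (- complex_of_real (sin (A j)) * v (2*j) + complex_of_real (cos (A j)) * v (2*j+1)))
              - q0 * (E j * (complex_of_real (cos (A j)) * v (2*j) + complex_of_real (sin (A j)) * v (2*j+1))))"
      by (rule sum.cong[OF refl]) (simp add: t_def t0_def t1_def ring_distribs mult.assoc mult.left_commute)
    then show ?thesis unfolding P_def Q_def by (simp add: sum_subtractf sum_distrib_left)
  qed
  show ?thesis using H[of t] unfolding L R .
qed



lemma sq_neg_real_Re0:
  fixes z :: complex and r :: real
  assumes "z^2 = - complex_of_real r" "r \<ge> 0"
  shows "Re z = 0"
proof (rule ccontr)
  assume nz: "Re z \<noteq> 0"
  have "Im (z^2) = 2 * Re z * Im z" by (simp add: power2_eq_square)
  moreover have "Im (z^2) = 0" using assms by simp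
  ultimately have "Im z = 0" using nz by simp
  then have "Re (z^2) = (Re z)^2" by (simp add: power2_eq_square)
  moreover have "Re (z^2) = - r" using assms by simp
  ultimately have h: "(Re z)^2 = - r" by simp
  have "(Re z)^2 > 0" using nz by simp
  then show False using h assms(2) by linarith
qed

lemma mode_alg:
  fixes P Q ev em ep :: complex and b0 s c sn phi :: real
  assumes s: "s = 2 - 2 * c" and em: "em = cis (- phi)" and ep: "ep = cis phi"
    and eq1: "complex_of_real b0 * 1 * P + complex_of_real s * (1 * P + 0 * Q) - (2 * (1 * P + 0 * Q) - em * (complex_of_real c * (1 * P + 0 * Q) + complex_of_real sn * (1 * Q - 0 * P)) - ep * (complex_of_real c * (1 * P + 0 * Q) - complex_of_real sn * (1 * Q - 0 * P))) = ev * (1 * Q - 0 * P)"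
    and eq2: "complex_of_real b0 * 0 * P + complex_of_real s * (0 * P + 1 * Q) - (2 * (0 * P + 1 * Q) - em * (complex_of_real c * (0 * P + 1 * Q) + complex_of_real sn * (0 * Q - 1 * P)) - ep * (complex_of_real c * (0 * P + 1 * Q) - complex_of_real sn * (0 * Q - 1 * P))) = ev * (0 * Q - 1 * P)"
    and nz: "P \<noteq> 0 \<or> Q \<noteq> 0"
    and cond: "(2 * c * (cos phi - 1)) * (2 * c * (cos phi - 1) + b0) \<ge> 0"
  shows "Re ev = 0"
proof -
  define al where "al = complex_of_real s - 2 + complex_of_real c * (em + ep)"
  define dl where "dl = complex_of_real sn * (em - ep)"
  define z where "z = ev - dl"
  have sum: "em + ep = complex_of_real (2 * cos phi)"
    by (simp add: em ep complex_eq_iff)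
  have dif: "em - ep = - 2 * \<i> * complex_of_real (sin phi)"
    by (simp add: em ep complex_eq_iff)
  have alr: "al = complex_of_real (2 * c * (cos phi - 1))"
    unfolding al_def sum s by (simp add: algebra_simps)
  have Redl: "Re dl = 0" unfolding dl_def dif by simp
  have E1: "(complex_of_real b0 + al) * P = z * Q"
  proof -
    have "(complex_of_real b0 + al) * P - z * Q = (complex_of_real b0 * 1 * P + complex_of_real s * (1 * P + 0 * Q) - (2 * (1 * P + 0 * Q) - em * (complex_of_real c * (1 * P + 0 * Q) + complex_of_real sn * (1 * Q - 0 * P)) - ep * (complex_of_real c * (1 * P + 0 * Q) - complex_of_real sn * (1 * Q - 0 * P)))) - ev * (1 * Q - 0 * P)"
      unfolding al_def z_def dl_def by (simp add: algebra_simps)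
    then show ?thesis using eq1 by simp
  qed
  have E2: "al * Q = - (z * P)"
  proof -
    have "al * Q + z * P = (complex_of_real b0 * 0 * P + complex_of_real s * (0 * P + 1 * Q) - (2 * (0 * P + 1 * Q) - em * (complex_of_real c * (0 * P + 1 * Q) + complex_of_real sn * (0 * Q - 1 * P)) - ep * (complex_of_real c * (0 * P + 1 * Q) - complex_of_real sn * (0 * Q - 1 * P)))) - ev * (0 * Q - 1 * P)"
      unfolding al_def z_def dl_def by (simp add: algebra_simps)
    then have "al * Q + z * P = 0" using eq2 by simp
    then show ?thesis by (simp add: eq_neg_iff_add_eq_0)
  qed
  have F1: "(al * (complex_of_real b0 + al) + z^2) * P = 0"
  proof -
    have "al * ((complex_of_real b0 + al) * P) = al * (z * Q)" using E1 by simp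
    then have "al * (complex_of_real b0 + al) * P = z * (al * Q)" by (simp add: algebra_simps)
    then have "al * (complex_of_real b0 + al) * P = - (z * (z * P))" using E2 by simp
    then have "al * (complex_of_real b0 + al) * P + z * (z * P) = 0" by (simp only: eq_neg_iff_add_eq_0)
    then show ?thesis by (simp add: algebra_simps power2_eq_square)
  qed
  have F2: "(al * (complex_of_real b0 + al) + z^2) * Q = 0"
  proof -
    have "(complex_of_real b0 + al) * (al * Q) = - ((complex_of_real b0 + al) * (z * P))" using E2 by simp
    then have "al * (complex_of_real b0 + al) * Q = - (z * ((complex_of_real b0 + al) * P))" by (simp add: algebra_simps)
    then have "al * (complex_of_real b0 + al) * Q = - (z * (z * Q))" using E1 by simp
    then have "al * (complex_of_real b0 + al) * Q + z * (z * Q) = 0" by (simp only: eq_neg_iff_add_eq_0)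
    then show ?thesis by (simp add: algebra_simps power2_eq_square)
  qed
  have "al * (complex_of_real b0 + al) + z^2 = 0" using F1 F2 nz by auto
  then have "z^2 = - complex_of_real ((2 * c * (cos phi - 1)) * (2 * c * (cos phi - 1) + b0))"
    unfolding alr by (simp add: algebra_simps eq_neg_iff_add_eq_0)
  then have "Re z = 0" using sq_neg_real_Re0 cond by blast
  then show ?thesis using Redl unfolding z_def by simp
qed



lemma cis_root_ne1:
  fixes i j n :: nat
  assumes "i < n" "j < n" "i \<noteq> j"
  shows "cis ((real j - real i) * (2 * pi / real n)) \<noteq> 1"
proof
  assume h: "cis ((real j - real i) * (2 * pi / real n)) = 1"
  then have "cos ((real j - real i) * (2 * pi / real n)) = 1"
    by (metis cis.sel(1) one_complex.sel(1))
  then obtain m :: int where m: "(real j - real i) * (2 * pi / real n) = real_of_int m * 2 * pi"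
    using cos_one_2pi_int by blast
  have n0: "real n > 0" using assms by simp
  have "2 * pi * (real j - real i) = 2 * pi * (real_of_int m * real n)"
    using m n0 by (simp add: field_simps)
  then have "(real j - real i) = real_of_int m * real n" using pi_gt_zero by simp
  then have e: "int j - int i = m * int n" by (metis of_int_eq_iff of_int_diff of_int_mult of_int_of_nat_eq)
  have "\<bar>int j - int i\<bar> < int n" using assms by auto
  then have "\<bar>m\<bar> * int n < 1 * int n" using e by (simp add: abs_mult)
  then have "m = 0" by (simp only: mult_less_cancel_right) auto
  then show False using e assms by simp
qed

lemma orth:
  fixes i j n :: nat
  assumes "i < n" "j < n"
  shows "(\<Sum>k<n. cis (real j * real k * (2 * pi / real n)) * cis (- (real i * real k * (2 * pi / real n))))
       = (if i = j then of_nat n else 0)"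
proof -
  define z where "z = 2 * pi / real n"
  define w where "w = cis ((real j - real i) * z)"
  have t: "cis (real j * real k * z) * cis (- (real i * real k * z)) = w ^ k" for k
  proof -
    have "real j * real k * z + - (real i * real k * z) = real k * ((real j - real i) * z)" by (simp add: algebra_simps)
    then show ?thesis unfolding w_def DeMoivre cis_mult by simp
  qed
  have wn: "w ^ n = 1"
  proof -
    have n0: "real n \<noteq> 0" using assms by simp
    have "real n * ((real j - real i) * z) = 2 * pi * (real j - real i)" using n0 by (simp add: z_def field_simps)
    then have "w ^ n = cis (2 * pi * (real j - real i))" unfolding w_def DeMoivre by (rule arg_cong[where f=cis])
    also have "\<dots> = 1" by (rule cis_multiple_2pi) simp
    finally show ?thesis .
  qed
  have "(\<Sum>k<n. cis (real j * real k * z) * cis (- (real i * real k * z))) = (if i = j then of_nat n else 0)"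
  proof (cases "i = j")
    case True
    then have "w = 1" by (simp add: w_def)
    then show ?thesis using True t by simp
  next
    case False
    then have "w \<noteq> 1" unfolding w_def z_def using cis_root_ne1 assms by blast
    then show ?thesis using False t sum_gp_strict[of w n] wn by simp
  qed
  then show ?thesis unfolding z_def .
qed

lemma inversion:
  fixes v :: "nat \<Rightarrow> complex" and A :: "nat \<Rightarrow> real" and n :: nat
  assumes n: "0 < n"
    and PQ: "\<And>k. k < n \<Longrightarrow> (\<Sum>j<n. cis (- (real j * real k * (2 * pi / real n))) * (complex_of_real (cos (A j)) * v (2*j) + complex_of_real (sin (A j)) * v (2*j+1))) = 0
       \<and> (\<Sum>j<n. cis (- (real j * real k * (2 * pi / real n))) * (- complex_of_real (sin (A j)) * v (2*j) + complex_of_real (cos (A j)) * v (2*j+1))) = 0"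
    and j: "j < n"
  shows "v (2*j) = 0 \<and> v (2*j+1) = 0"
proof -
  have recon: "(\<Sum>k<n. cis (real j * real k * (2 * pi / real n)) * (\<Sum>i<n. cis (- (real i * real k * (2 * pi / real n))) * f i)) = of_nat n * f j"
    for f :: "nat \<Rightarrow> complex"
  proof -
    have "(\<Sum>k<n. cis (real j * real k * (2 * pi / real n)) * (\<Sum>i<n. cis (- (real i * real k * (2 * pi / real n))) * f i))
        = (\<Sum>i<n. f i * (\<Sum>k<n. cis (real j * real k * (2 * pi / real n)) * cis (- (real i * real k * (2 * pi / real n)))))"
    proof -
      have "(\<Sum>k<n. cis (real j * real k * (2 * pi / real n)) * (\<Sum>i<n. cis (- (real i * real k * (2 * pi / real n))) * f i))
        = (\<Sum>k<n. \<Sum>i<n. f i * (cis (real j * real k * (2 * pi / real n)) * cis (- (real i * real k * (2 * pi / real n)))))"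
        by (simp add: sum_distrib_left ac_simps)
      also have "\<dots> = (\<Sum>i<n. \<Sum>k<n. f i * (cis (real j * real k * (2 * pi / real n)) * cis (- (real i * real k * (2 * pi / real n)))))"
        by (rule sum.swap)
      also have "\<dots> = (\<Sum>i<n. f i * (\<Sum>k<n. cis (real j * real k * (2 * pi / real n)) * cis (- (real i * real k * (2 * pi / real n)))))"
        by (simp add: sum_distrib_left)
      finally show ?thesis .
    qed
    also have "\<dots> = (\<Sum>i<n. if i = j then f i * of_nat n else 0)"
    proof (rule sum.cong[OF refl])
      fix i assume "i \<in> {..<n}"
      then have i: "i < n" by simp
      show "f i * (\<Sum>k<n. cis (real j * real k * (2 * pi / real n)) * cis (- (real i * real k * (2 * pi / real n))))
          = (if i = j then f i * of_nat n else 0)" unfolding orth[OF i j] by simp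
    qed
    also have "\<dots> = of_nat n * f j" using j by (simp add: sum.delta)
    finally show ?thesis .
  qed
  have p: "of_nat n * (complex_of_real (cos (A j)) * v (2*j) + complex_of_real (sin (A j)) * v (2*j+1)) = 0"
    using recon[of "\<lambda>i. complex_of_real (cos (A i)) * v (2*i) + complex_of_real (sin (A i)) * v (2*i+1)"] PQ by simp
  have q: "of_nat n * (- complex_of_real (sin (A j)) * v (2*j) + complex_of_real (cos (A j)) * v (2*j+1)) = 0"
    using recon[of "\<lambda>i. - complex_of_real (sin (A i)) * v (2*i) + complex_of_real (cos (A i)) * v (2*i+1)"] PQ by simp
  have p0: "complex_of_real (cos (A j)) * v (2*j) + complex_of_real (sin (A j)) * v (2*j+1) = 0" using p n by simp
  have q0: "- complex_of_real (sin (A j)) * v (2*j) + complex_of_real (cos (A j)) * v (2*j+1) = 0" using q n by simp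
  have cs: "complex_of_real (cos (A j)) * complex_of_real (cos (A j)) + complex_of_real (sin (A j)) * complex_of_real (sin (A j)) = 1"
    by (metis of_real_1 of_real_add of_real_mult sin_cos_squared_add3)
  let ?c = "complex_of_real (cos (A j))" and ?s = "complex_of_real (sin (A j))"
  have "?c * (?c * v (2*j) + ?s * v (2*j+1)) - ?s * (- ?s * v (2*j) + ?c * v (2*j+1)) = (?c * ?c + ?s * ?s) * v (2*j)"
    by (simp add: algebra_simps)
  then have "v (2*j) = ?c * (?c * v (2*j) + ?s * v (2*j+1)) - ?s * (- ?s * v (2*j) + ?c * v (2*j+1))"
    using cs by simp
  then have a: "v (2*j) = 0" unfolding p0 q0 by simp
  have "?s * (?c * v (2*j) + ?s * v (2*j+1)) + ?c * (- ?s * v (2*j) + ?c * v (2*j+1)) = (?c * ?c + ?s * ?s) * v (2*j+1)"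
    by (simp add: algebra_simps)
  then have "v (2*j+1) = ?s * (?c * v (2*j) + ?s * v (2*j+1)) + ?c * (- ?s * v (2*j) + ?c * v (2*j+1))"
    using cs by simp
  then have b: "v (2*j+1) = 0" unfolding p0 q0 by simp
  show ?thesis using a b by simp
qed



lemma cos_k_le:
  fixes n k :: nat
  assumes "1 \<le> k" "k < n"
  shows "cos (real k * (2 * pi / real n)) \<le> cos (2 * pi / real n)"
proof -
  define z where "z = 2 * pi / real n"
  have n0: "real n > 0" using assms by simp
  have z0: "z > 0" using n0 by (simp add: z_def)
  have nz: "real n * z = 2 * pi" using n0 by (simp add: z_def)
  have kz: "z \<le> real k * z" using assms z0 by simp
  show ?thesis
  proof (cases "real k * z \<le> pi")
    case True
    then show ?thesis using cos_monotone_0_pi_le[of z "real k * z"] z0 kz unfolding z_def by simp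
  next
    case False
    have e: "real k * z = 2 * pi - real (n - k) * z" using assms nz by (simp add: of_nat_diff algebra_simps)
    have "real (n - k) \<ge> 1" using assms by simp
    then have a: "z \<le> real (n - k) * z" using z0 by simp
    have b: "real (n - k) * z \<le> pi" using False e by simp
    have "cos (real k * z) = cos (real (n - k) * z)" unfolding e by (rule cos_2pi_minus)
    also have "\<dots> \<le> cos z" using cos_monotone_0_pi_le[of z "real (n - k) * z"] z0 a b by simp
    finally show ?thesis unfolding z_def .
  qed
qed

lemma cond_trig:
  fixes n m k :: nat and D a :: real
  assumes n3: "n \<ge> 3" and m1: "1 \<le> m" and mr: "(real m < real n / 4) \<or> (real n / 4 < real m \<and> real m \<le> real n / 2)"
    and a0: "a > 0" and k: "k < n" and D0: "D \<noteq> 0"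
    and sg: "(if real m < real n / 4 then sgn D else - sgn D) < 0
      \<or> ((if real m < real n / 4 then sgn D else - sgn D) > 0
          \<and> 2 * a\<^sup>2 / (4 * cos (real m * (2 * pi / real n)) * (sin ((2 * pi / real n) / 2))\<^sup>2) * D < 1)"
  shows "(2 * cos (real m * (2 * pi / real n)) * (cos (real k * (2 * pi / real n)) - 1))
       * (2 * cos (real m * (2 * pi / real n)) * (cos (real k * (2 * pi / real n)) - 1) + 2 * D * a^2) \<ge> 0"
proof -
  define z where "z = 2 * pi / real n"
  define c where "c = cos (real m * z)"
  define d where "d = 1 - cos (real k * z)"
  define d1 where "d1 = 1 - cos z"
  have n0: "real n > 0" using n3 by simp
  have z0: "z > 0" using n0 by (simp add: z_def)
  have d0: "d \<ge> 0" by (simp add: d_def)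
  have a2: "a^2 > 0" using a0 by simp
  have expr: "(2 * c * (cos (real k * z) - 1)) * (2 * c * (cos (real k * z) - 1) + 2 * D * a^2)
      = 4 * (c * c * d * d - c * d * (D * a^2))" by (simp add: d_def algebra_simps)
  have csign: "(real m < real n / 4 \<longrightarrow> c > 0) \<and> (\<not> real m < real n / 4 \<longrightarrow> c < 0)"
  proof (intro conjI impI)
    assume "real m < real n / 4"
    then have "real m * z < pi / 2" using n0 by (simp add: z_def field_simps)
    moreover have "real m * z > 0" using m1 z0 by simp
    ultimately show "c > 0" unfolding c_def by (intro cos_gt_zero_pi) auto
  next
    assume "\<not> real m < real n / 4"
    then have h: "real n / 4 < real m \<and> real m \<le> real n / 2" using mr by simp
    then have "pi / 2 < real m * z" "real m * z \<le> pi" using n0 by (simp_all add: z_def field_simps)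
    then have "cos (pi - real m * z) > 0" by (intro cos_gt_zero_pi) auto
    then show "c < 0" unfolding c_def by simp
  qed
  have "4 * (c * c * d * d - c * d * (D * a^2)) \<ge> 0"
  proof (cases "c * D < 0")
    case True
    have e: "c * d * (D * a^2) = (c * D) * (d * a^2)" by (simp add: algebra_simps)
    have "d * a^2 \<ge> 0" using d0 a2 by simp
    then have "(c * D) * (d * a^2) \<le> 0" using True by (intro mult_nonpos_nonneg[OF less_imp_le[OF True]])
    then have "c * d * (D * a^2) \<le> 0" using e by linarith
    moreover have "c * c * d * d \<ge> 0" using zero_le_square[of "c*d"] by (simp add: algebra_simps)
    ultimately show ?thesis by simp
  next
    case False
    have cnz: "c \<noteq> 0" using csign by auto
    have cD: "c * D > 0" using False cnz D0 by (simp add: not_less order_le_less)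
    have sgpos: "(if real m < real n / 4 then sgn D else - sgn D) > 0"
    proof (cases "real m < real n / 4")
      case True
      then have "c > 0" using csign by auto
      then have "D > 0" using cD by (simp add: zero_less_mult_iff)
      then show ?thesis using True by simp
    next
      case False
      then have "c < 0" using csign by auto
      then have "D < 0" using cD by (simp add: zero_less_mult_iff)
      then show ?thesis using False by simp
    qed
    have phi: "2 * a\<^sup>2 / (4 * c * (sin (z / 2))\<^sup>2) * D < 1"
      using sg sgpos unfolding c_def z_def by auto
    have sh: "(sin (z / 2))\<^sup>2 = d1 / 2" using cos_double_sin[of "z/2"] by (simp add: d1_def)
    have phi2: "a^2 * D / (c * d1) < 1" using phi unfolding sh by (simp add: field_simps)
    show ?thesis
    proof (cases "k = 0")
      case True
      then have "d = 0" by (simp add: d_def)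
      then show ?thesis by simp
    next
      case False
      then have dd1: "d1 \<le> d" using cos_k_le[of k n] k unfolding d_def d1_def z_def by simp
      have "sin (z / 2) > 0"
      proof (rule sin_gt_zero)
        show "0 < z / 2" using z0 by simp
        have "z \<le> 2 * pi / 3" using n3 n0 by (simp add: z_def field_simps)
        then show "z / 2 < pi" using pi_gt_zero by linarith
      qed
      then have d1p: "d1 > 0" using sh by (metis half_gt_zero_iff zero_less_power)
      define u where "u = c * d"
      define w where "w = D * a^2"
      have "u * w \<le> u * u"
      proof (cases "c > 0")
        case True
        then have "c * d1 > 0" using d1p by simp
        then have "a^2 * D < c * d1" using phi2 by (simp add: divide_less_eq)
        also have "c * d1 \<le> c * d" using True dd1 by simp
        finally have "w \<le> u" by (simp add: u_def w_def algebra_simps)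
        moreover have "u \<ge> 0" using True d0 by (simp add: u_def)
        ultimately show ?thesis by (simp add: mult_left_mono)
      next
        case False
        then have cn: "c < 0" using cnz by simp
        then have "c * d1 < 0" using d1p by (simp add: mult_neg_pos)
        then have "a^2 * D > c * d1" using phi2 by (simp add: divide_less_eq)
        moreover have "c * d \<le> c * d1" using cn dd1 by (simp add: mult_left_mono_neg)
        ultimately have "u \<le> w" by (simp add: u_def w_def algebra_simps)
        moreover have "u \<le> 0" using cn d0 by (simp add: u_def mult_nonpos_nonneg)
        ultimately show ?thesis by (simp add: mult_left_mono_neg)
      qed
      then show ?thesis by (simp add: u_def w_def algebra_simps)
    qed
  qed
  then show ?thesis using expr unfolding z_def c_def d_def by simp
qed




theorem theorem2:
  fixes V :: "real \<Rightarrow> real" and n m :: nat and a :: real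
  assumes "n \<ge> 3"
    and "1 \<le> m" and "(real m < real n / 4) \<or> (real n / 4 < real m \<and> real m \<le> real n / 2)"
    and "a > 0"
    and "smooth_fun V"
    and "deriv (deriv V) (a\<^sup>2) \<noteq> 0"
    and "sigma_m V n m a < 0 \<or> (sigma_m V n m a > 0 \<and> phi1 V n m a < 1)"
  shows "linearly_stable V n m a"
proof -
  have n0: "0 < n" using assms(1) by simp
  have sm: "\<forall>k x. ((deriv ^^ k) V) differentiable (at x)" using assms(5) unfolding smooth_fun_def .
  have dV: "V differentiable at y" for y
  proof -
    have "((deriv ^^ 0) V) differentiable at y" using sm by blast
    then show ?thesis by simp
  qed
  have dV': "deriv V differentiable at y" for y
  proof -
    have "((deriv ^^ 1) V) differentiable at y" using sm by blast
    then show ?thesis by simp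
  qed
  define D where "D = deriv (deriv V) (a^2)"
  define s where "s = deriv V (a^2) + lat_omega V n m a"
  define th where "th = real m * (2 * pi / real n)"
  define A where "A j = real j * real m * (2 * pi / real n)" for j
  define E where "E k j = cis (- (real j * real k * (2 * pi / real n)))" for k j :: nat
  have x0e: "eq_am n m a (2*j) = a * cos (A j)" "eq_am n m a (2*j+1) = a * sin (A j)" for j
    by (simp_all add: eq_am_def A_def)
  have r: "(eq_am n m a (2*j))\<^sup>2 + (eq_am n m a (2*j+1))\<^sup>2 = a^2" for j
  proof -
    have "(a * cos (A j))\<^sup>2 + (a * sin (A j))\<^sup>2 = a^2 * (cos (A j))\<^sup>2 + a^2 * (sin (A j))\<^sup>2"
      by (simp add: power_mult_distrib)
    also have "\<dots> = a^2 * ((sin (A j))\<^sup>2 + (cos (A j))\<^sup>2)" by (simp only: distrib_left add.commute)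
    also have "\<dots> = a^2" by simp
    finally show ?thesis unfolding x0e .
  qed
  have s2: "s = 2 - 2 * cos th"
  proof -
    have "cos (2 * (th / 2)) = 1 - 2 * (sin (th / 2))\<^sup>2" by (rule cos_double_sin)
    then have c: "cos th = 1 - 2 * (sin (th / 2))\<^sup>2" by simp
    have "lat_omega V n m a = 4 * (sin (th / 2))\<^sup>2 - deriv V (a^2)" by (simp add: lat_omega_def th_def)
    then show ?thesis using c unfolding s_def by simp
  qed
  show ?thesis unfolding linearly_stable_def
  proof (intro allI impI)
    fix ev :: complex
    assume "eigenvalue (map_mat complex_of_real (sympl_J n * hessian_mat (2*n) (lat_H V n (lat_omega V n m a)) (eq_am n m a))) ev"
    then obtain v where vc: "v \<in> carrier_vec (2*n)" and vnz: "v \<noteq> 0\<^sub>v (2*n)"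
      and eq: "map_mat complex_of_real (sympl_J n * hessian_mat (2*n) (lat_H V n (lat_omega V n m a)) (eq_am n m a)) *\<^sub>v v = ev \<cdot>\<^sub>v v"
      unfolding eigenvalue_def eigenvector_def by (auto simp: sympl_J_def)
    have H: "(\<Sum>j<n. complex_of_real (2*D) * (complex_of_real (a*cos (A j)) * vec_index v (2*j) + complex_of_real (a* sin (A j)) * vec_index v (2*j+1))
        * (complex_of_real (a*cos (A j)) * t (2*j) + complex_of_real (a* sin (A j)) * t (2*j+1))
      + complex_of_real s * (t (2*j) * vec_index v (2*j) + t (2*j+1) * vec_index v (2*j+1))
      - (t (2*((j+1) mod n)) - t (2*j)) * (vec_index v (2*((j+1) mod n)) - vec_index v (2*j))
      - (t (2*((j+1) mod n)+1) - t (2*j+1)) * (vec_index v (2*((j+1) mod n)+1) - vec_index v (2*j+1)))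
      = ev * (\<Sum>j<n. t (2*j) * vec_index v (2*j+1) - t (2*j+1) * vec_index v (2*j))" for t
    proof -
      note h1 = eig_test[OF n0 dV dV' vc eq, of t]
      note h2 = Hs_bilin[OF n0, of t V "lat_omega V n m a" "eq_am n m a" "vec_index v"]
      note h3 = h1[unfolded h2, unfolded r, unfolded x0e D_def[symmetric] s_def[symmetric]]
      show ?thesis by (rule h3)
    qed
    define P where "P k = (\<Sum>j<n. E k j * (complex_of_real (cos (A j)) * vec_index v (2*j) + complex_of_real (sin (A j)) * vec_index v (2*j+1)))" for k
    define Q where "Q k = (\<Sum>j<n. E k j * (- complex_of_real (sin (A j)) * vec_index v (2*j) + complex_of_real (cos (A j)) * vec_index v (2*j+1)))" for k
    have "\<exists>k<n. P k \<noteq> 0 \<or> Q k \<noteq> 0"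
    proof (rule ccontr)
      assume "\<not> (\<exists>k<n. P k \<noteq> 0 \<or> Q k \<noteq> 0)"
      then have all: "P k = 0 \<and> Q k = 0" if "k < n" for k using that by auto
      have PQ: "(\<Sum>j<n. cis (- (real j * real k * (2 * pi / real n))) * (complex_of_real (cos (A j)) * vec_index v (2*j) + complex_of_real (sin (A j)) * vec_index v (2*j+1))) = 0
       \<and> (\<Sum>j<n. cis (- (real j * real k * (2 * pi / real n))) * (- complex_of_real (sin (A j)) * vec_index v (2*j) + complex_of_real (cos (A j)) * vec_index v (2*j+1))) = 0"
        if "k < n" for k using all[OF that] unfolding P_def Q_def E_def .
      have z: "vec_index v (2*j) = 0 \<and> vec_index v (2*j+1) = 0" if "j < n" for j
        by (rule inversion[OF n0 PQ that])
      have "v = 0\<^sub>v (2*n)"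
      proof (rule eq_vecI)
        show "dim_vec v = dim_vec (0\<^sub>v (2*n))" using vc by simp
        fix i assume "i < dim_vec (0\<^sub>v (2*n))"
        then have i: "i < 2*n" by simp
        have "i div 2 < n" using i by simp
        moreover have "i = 2 * (i div 2) \<or> i = 2 * (i div 2) + 1" by presburger
        ultimately have "vec_index v i = 0" using z by metis
        then show "vec_index v i = vec_index (0\<^sub>v (2*n)) i" using i by simp
      qed
      then show False using vnz by simp
    qed
    then obtain k where k: "k < n" and nz: "P k \<noteq> 0 \<or> Q k \<noteq> 0" by blast
    define phi where "phi = real k * (2 * pi / real n)"
    have Emul: "E k (Suc j) = E k j * cis (- phi)" for j
      unfolding E_def phi_def cis_mult by (rule arg_cong[where f=cis]) (simp add: algebra_simps add_divide_distrib)
    have emp: "cis (- phi) * cis phi = 1" by (simp add: cis_mult)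
    have Eper: "E k n = E k 0"
    proof -
      have "- (real n * real k * (2 * pi / real n)) = 2 * pi * (- real k)" using n0 by (simp add: field_simps)
      then have "E k n = cis (2 * pi * (- real k))" unfolding E_def by simp
      also have "\<dots> = 1" by (rule cis_multiple_2pi) simp
      finally show ?thesis by (simp add: E_def)
    qed
    have An: "A n = 2 * pi * real m" using n0 by (simp add: A_def field_simps)
    have Aper: "cos (A n) = cos (A 0)" "sin (A n) = sin (A 0)"
      unfolding An by (simp_all add: A_def cos_integer_2pi sin_integer_2pi)
    have Asuc: "A (Suc j) = A j + th" for j by (simp add: A_def th_def algebra_simps add_divide_distrib)
    note ME = mode_equation[OF n0 Asuc Emul emp Eper Aper H]
    note eq1 = ME[where ?p0.0=1 and ?q0.0=0]
    note eq2 = ME[where ?p0.0=0 and ?q0.0=1]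
    have D0: "D \<noteq> 0" using assms(6) by (simp add: D_def)
    have sg: "(if real m < real n / 4 then sgn D else - sgn D) < 0
      \<or> ((if real m < real n / 4 then sgn D else - sgn D) > 0
          \<and> 2 * a\<^sup>2 / (4 * cos (real m * (2 * pi / real n)) * (sin ((2 * pi / real n) / 2))\<^sup>2) * D < 1)"
      using assms(7) unfolding sigma_m_def phi1_def alpha1_def D_def by simp
    have cond: "(2 * cos th * (cos phi - 1)) * (2 * cos th * (cos phi - 1) + 2 * D * a^2) \<ge> 0"
      using cond_trig[OF assms(1) assms(2) assms(3) assms(4) k D0 sg] unfolding th_def phi_def .
    have nz': "(\<Sum>j<n. E k j * (complex_of_real (cos (A j)) * vec_index v (2*j) + complex_of_real (sin (A j)) * vec_index v (2*j+1))) \<noteq> 0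
      \<or> (\<Sum>j<n. E k j * (- complex_of_real (sin (A j)) * vec_index v (2*j) + complex_of_real (cos (A j)) * vec_index v (2*j+1))) \<noteq> 0"
      using nz unfolding P_def Q_def .
    show "Re ev = 0" by (rule mode_alg[OF s2 refl refl eq1 eq2 nz' cond])
  qed
qed

end
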